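(* Let $n\in\{3,4,5,\dots\}\cup\{\infty\}$ and let $\Omega_n$ be the regular polygon state space. There exists a function $S:\Omega_n\to\mathbb R$ such that $S(\sigma)=0$ for every pure state $\sigma$ of $\Omega_n$ and such that $$S\Big(\sum_{i=1}^lp_i\omega_i\Big)=\sum_{i=1}^lp_iS(\omega_i)-\sum_{i=1}^lp_i\log p_i$$ for every finite perfectly distinguishable family $\{\omega_1,\dots,\omega_l\}\subset\Omega_n$ and every probability vector $(p_1,\dots,p_l)$ (with $0\log0=0$), if and only if $n=3$ or $n=\infty$.
   Context: For finite $n\ge3$, $\Omega_n\subset\mathbb R^3$ is the convex hull of the points $\omega_i^n=(r_n\cos\frac{2\pi i}{n},\,r_n\sin\frac{2\pi i}{n},\,1)$, $i=0,\dots,n-1$, where $r_n=\sqrt{1/\cos(\pi/n)}$; $\Omega_\infty=\{(x,y,1):x^2+y^2\le1\}$. Pure states are the extreme points of $\Omega_n$. Effects are the linear functionals $e$ on $\mathbb R^3$ with $0\le e(\omega)\le1$ for all $\omega\in\Omega_n$ (no-restriction), and the unit effect $u$ is the one with $u\equiv1$ on $\Omega_n$. A family $\{\omega_1,\dots,\omega_l\}$ of states is perfectly distinguishable if there exist effects $e_1,\dots,e_l$ with $\sum_ie_i=u$ and $e_i(\omega_j)=\delta_{ij}$. *)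

theory Defs
  imports "HOL-Analysis.Analysis" "HOL-Library.Extended_Nat"
begin

definition polygon_radius :: "nat \<Rightarrow> real" where
  "polygon_radius m = sqrt (1 / cos (pi / real m))"

definition polygon_vertex :: "nat \<Rightarrow> nat \<Rightarrow> real^3" where
  "polygon_vertex m i =
     vector [polygon_radius m * cos (2 * pi * real i / real m),
             polygon_radius m * sin (2 * pi * real i / real m), 1]"

definition Omega :: "enat \<Rightarrow> (real^3) set" where
  "Omega n = (case n of
      enat m \<Rightarrow> convex hull {polygon_vertex m i | i. i < m}
    | \<infinity> \<Rightarrow> {v. v $ 3 = 1 \<and> (v $ 1)\<^sup>2 + (v $ 2)\<^sup>2 \<le> 1})"

definition pure_states :: "enat \<Rightarrow> (real^3) set" where
  "pure_states n = {x. x extreme_point_of Omega n}"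

text \<open>Effects: linear functionals on R^3, represented by a vector a via \<open>\<omega> \<mapsto> a \<bullet> \<omega>\<close>
  (no-restriction hypothesis).\<close>

definition is_effect :: "enat \<Rightarrow> real^3 \<Rightarrow> bool" where
  "is_effect n a \<longleftrightarrow> (\<forall>\<omega>\<in>Omega n. 0 \<le> a \<bullet> \<omega> \<and> a \<bullet> \<omega> \<le> 1)"

definition unit_effect :: "enat \<Rightarrow> real^3" where
  "unit_effect n = (THE u. is_effect n u \<and> (\<forall>\<omega>\<in>Omega n. u \<bullet> \<omega> = 1))"

definition perfectly_distinguishable :: "enat \<Rightarrow> nat \<Rightarrow> (nat \<Rightarrow> real^3) \<Rightarrow> bool" where
  "perfectly_distinguishable n l \<omega> \<longleftrightarrow>
     (\<exists>e :: nat \<Rightarrow> real^3.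
        (\<forall>i<l. is_effect n (e i)) \<and>
        (\<Sum>i<l. e i) = unit_effect n \<and>
        (\<forall>i<l. \<forall>j<l. e i \<bullet> \<omega> j = (if i = j then 1 else 0)))"

definition plogp :: "real \<Rightarrow> real" where
  "plogp p = (if p = 0 then 0 else p * ln p)"

definition entropy_like :: "enat \<Rightarrow> (real^3 \<Rightarrow> real) \<Rightarrow> bool" where
  "entropy_like n S \<longleftrightarrow>
     (\<forall>\<sigma>\<in>pure_states n. S \<sigma> = 0) \<and>
     (\<forall>l (\<omega> :: nat \<Rightarrow> real^3) (p :: nat \<Rightarrow> real).
        (\<forall>i<l. \<omega> i \<in> Omega n) \<and> perfectly_distinguishable n l \<omega> \<and>
        (\<forall>i<l. 0 \<le> p i) \<and> (\<Sum>i<l. p i) = 1 \<longrightarrow>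
        S (\<Sum>i<l. p i *\<^sub>R \<omega> i) = (\<Sum>i<l. p i * S (\<omega> i)) - (\<Sum>i<l. plogp (p i)))"

end

theory Submission
  imports Defs
begin

lemma pv_comp:
  "polygon_vertex m i $ 1 = polygon_radius m * cos (2 * pi * real i / real m)"
  "polygon_vertex m i $ 2 = polygon_radius m * sin (2 * pi * real i / real m)"
  "polygon_vertex m i $ 3 = 1"
  by (simp_all add: polygon_vertex_def)

lemma inner3: "(a::real^3) \<bullet> b = a$1 * b$1 + a$2 * b$2 + a$3 * b$3"
  by (simp add: inner_vec_def sum_3)

lemma radius_pos: assumes "m \<ge> 3" shows "polygon_radius m > 0"
proof -
  have "pi / real m \<le> pi / 3" using assms by (intro divide_left_mono) auto
  also have "\<dots> < pi/2" by simp
  finally have "cos (pi / real m) > 0" using assms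
    by (intro cos_gt_zero) (auto intro: less_le_trans[of _ 0] )
  then show ?thesis by (simp add: polygon_radius_def)
qed

lemma Omega_fin: "Omega (enat m) = convex hull {polygon_vertex m i | i. i < m}"
  by (simp add: Omega_def)

lemma Omega_z: assumes "\<omega> \<in> Omega n" shows "\<omega> $ 3 = 1"
proof (cases n)
  case (enat m)
  have cv: "convex {x::real^3. x $ 3 = 1}"
    unfolding convex_def by (auto simp: algebra_simps)
  have "convex hull {polygon_vertex m i | i. i < m} \<subseteq> {x::real^3. x $ 3 = 1}"
    by (rule hull_minimal) (auto simp: pv_comp cv)
  then show ?thesis using assms enat by (auto simp: Omega_def)
next
  case infinity
  then show ?thesis using assms by (simp add: Omega_def)
qed

lemma effect_fin:
  assumes "\<And>i. i < m \<Longrightarrow> 0 \<le> a \<bullet> polygon_vertex m i \<and> a \<bullet> polygon_vertex m i \<le> 1"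
  shows "is_effect (enat m) a"
proof -
  have cv: "convex ({x. inner a x \<ge> 0} \<inter> {x. inner a x \<le> 1})"
    by (intro convex_Int convex_halfspace_le convex_halfspace_ge)
  have "convex hull {polygon_vertex m i | i. i < m} \<subseteq> {x. inner a x \<ge> 0} \<inter> {x. inner a x \<le> 1}"
    by (rule hull_minimal) (use assms cv in auto)
  then show ?thesis unfolding is_effect_def Omega_fin by auto
qed

definition e3 :: "real^3" where "e3 = vector [0,0,1]"

lemma e3_inner: "e3 \<bullet> x = x $ 3"
  by (simp add: e3_def inner3)

lemma unit_effect_char:
  assumes "\<And>u. (\<forall>\<omega>\<in>Omega n. u \<bullet> \<omega> = 1) \<Longrightarrow> u = e3"
  shows "unit_effect n = e3"
  unfolding unit_effect_def
proof (rule the_equality)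
  show "is_effect n e3 \<and> (\<forall>\<omega>\<in>Omega n. e3 \<bullet> \<omega> = 1)"
    by (auto simp: is_effect_def e3_inner Omega_z)
next
  fix u assume "is_effect n u \<and> (\<forall>\<omega>\<in>Omega n. u \<bullet> \<omega> = 1)"
  then show "u = e3" using assms by blast
qed

lemma vec3_eq: "(x::real^3) = y \<longleftrightarrow> x$1 = y$1 \<and> x$2 = y$2 \<and> x$3 = y$3"
  by (simp add: vec_eq_iff forall_3)

lemma angle_facts:
  assumes "m \<ge> 3"
  shows "sin (2*pi/real m) > 0" "cos (2*pi/real m) < 1"
proof -
  have m: "real m \<ge> 3" using assms by simp
  have a: "0 < 2*pi/real m" using m by simp
  have b: "2*pi/real m < pi" using m by (simp add: field_simps)
  show "sin (2*pi/real m) > 0" using a b by (rule sin_gt_zero)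
  have "cos (2*pi/real m) < cos 0"
    using a b by (intro cos_monotone_0_pi) auto
  then show "cos (2*pi/real m) < 1" by simp
qed

lemma pv_last:
  assumes "m \<ge> 1"
  shows "cos (2 * pi * (real m - 1) / real m) = cos (2*pi/real m)"
        "sin (2 * pi * (real m - 1) / real m) = - sin (2*pi/real m)"
proof -
  have "2 * pi * (real m - 1) / real m = 2*pi - 2*pi/real m"
    using assms by (simp add: field_simps)
  then show "cos (2 * pi * (real m - 1) / real m) = cos (2*pi/real m)"
        "sin (2 * pi * (real m - 1) / real m) = - sin (2*pi/real m)"
    by (simp_all add: cos_diff sin_diff)
qed

lemma unit_effect_fin:
  assumes "m \<ge> 3" shows "unit_effect (enat m) = e3"
proof (rule unit_effect_char)
  fix u :: "real^3" assume H: "\<forall>\<omega>\<in>Omega (enat m). u \<bullet> \<omega> = 1"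
  have mem: "polygon_vertex m i \<in> Omega (enat m)" if "i < m" for i
    unfolding Omega_fin by (rule hull_inc) (use that in blast)
  define r where "r = polygon_radius m"
  define c where "c = cos (2*pi/real m)"
  define s where "s = sin (2*pi/real m)"
  have r: "r > 0" using radius_pos[OF assms] by (simp add: r_def)
  have s: "s > 0" and c: "c < 1" using angle_facts[OF assms] by (auto simp: s_def c_def)
  have h0: "u \<bullet> polygon_vertex m 0 = 1" using H mem[of 0] assms by simp
  have h1: "u \<bullet> polygon_vertex m 1 = 1" using H mem[of 1] assms by simp
  have h2: "u \<bullet> polygon_vertex m (m-1) = 1" using H mem[of "m-1"] assms by simp
  have e0: "u$1 * r + u$3 = 1" using h0 by (simp add: inner3 pv_comp r_def)
  have e1: "u$1 * (r * c) + u$2 * (r * s) + u$3 = 1" using h1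
    by (simp add: inner3 pv_comp r_def c_def s_def)
  have e2: "u$1 * (r * c) - u$2 * (r * s) + u$3 = 1" using h2 assms
    by (simp add: inner3 pv_comp r_def c_def s_def pv_last)
  have "u$2 * (r * s) = 0" using e1 e2 by linarith
  then have u2: "u$2 = 0" using r s by simp
  have "u$1 * (r * (1 - c)) = (u$1 * r + u$3) - (u$1 * (r * c) + u$2 * (r * s) + u$3)"
    using u2 by (simp add: algebra_simps)
  also have "\<dots> = 0" using e0 e1 by simp
  finally have "u$1 * (r * (1 - c)) = 0" .
  then have u1: "u$1 = 0" using r c by simp
  then have "u$3 = 1" using e0 by simp
  then show "u = e3" using u1 u2 by (simp add: vec3_eq e3_def)
qed

lemma unit_effect_inf: "unit_effect \<infinity> = e3"
proof (rule unit_effect_char)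
  fix u :: "real^3" assume H: "\<forall>\<omega>\<in>Omega \<infinity>. u \<bullet> \<omega> = 1"
  have "(vector [1,0,1]::real^3) \<in> Omega \<infinity>" "(vector [-1,0,1]::real^3) \<in> Omega \<infinity>"
       "(vector [0,1,1]::real^3) \<in> Omega \<infinity>"
    by (auto simp: Omega_def)
  then have "u$1 + u$3 = 1" "-u$1 + u$3 = 1" "u$2 + u$3 = 1"
    using H by (auto simp: inner3)
  then show "u = e3" by (simp add: vec3_eq e3_def)
qed

definition hh :: "real \<Rightarrow> real" where "hh t = - plogp t"
definition FF :: "(real^3 \<Rightarrow> real) \<Rightarrow> real^3 \<Rightarrow> real" where
  "FF S y = y$3 * S ((1 / y$3) *\<^sub>R y) + hh (y$3)"

lemma hh_0[simp]: "hh 0 = 0" and hh_1[simp]: "hh 1 = 0"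
  by (simp_all add: hh_def plogp_def)

lemma FF_scale: assumes "\<omega>$3 = 1" "l \<ge> 0" shows "FF S (l *\<^sub>R \<omega>) = l * S \<omega> + hh l"
  using assms by (cases "l = 0") (auto simp: FF_def)

lemma plogp_scale: assumes "s > 0" "a \<ge> 0" shows "s * plogp (a/s) = plogp a - a * ln s"
proof (cases "a = 0")
  case True then show ?thesis by (simp add: plogp_def)
next
  case False
  then have "a > 0" using assms by simp
  then show ?thesis using assms by (simp add: plogp_def ln_div algebra_simps)
qed

lemma less2: "i < (2::nat) \<longleftrightarrow> i = 0 \<or> i = 1" by auto

lemma sum2: "(\<Sum>i<(2::nat). f i) = f 0 + f 1"
  by (simp add: numeral_2_eq_2)

lemma dist2:
  assumes "is_effect n e" "\<omega>0 \<in> Omega n" "\<omega>1 \<in> Omega n" "e \<bullet> \<omega>0 = 0" "e \<bullet> \<omega>1 = 1"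
    "unit_effect n = e3"
  shows "perfectly_distinguishable n 2 (\<lambda>i. if i = 0 then \<omega>0 else \<omega>1)"
  unfolding perfectly_distinguishable_def
proof (intro exI[of _ "\<lambda>i. if i = 0 then e3 - e else e"] conjI allI impI)
  have "is_effect n (e3 - e)"
    using assms(1) by (auto simp: is_effect_def inner_diff_left e3_inner Omega_z)
  then show "is_effect n (if i = 0 then e3 - e else e)" if "i < 2" for i :: nat
    using assms(1) by auto
  show "(\<Sum>i<(2::nat). if i = 0 then e3 - e else e) = unit_effect n"
    using assms(6) by (simp add: sum2)
  show "(if i = 0 then e3 - e else e) \<bullet> (if j = 0 then \<omega>0 else \<omega>1) = (if i = j then 1 else 0)"
    if "i < 2" "j < 2" for i j :: nat
    using that assms by (auto simp: less2 inner_diff_left e3_inner Omega_z)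
qed

lemma FF_add:
  assumes ent: "entropy_like n S" and mem: "\<omega>0 \<in> Omega n" "\<omega>1 \<in> Omega n"
    and pd: "perfectly_distinguishable n 2 (\<lambda>i. if i = 0 then \<omega>0 else \<omega>1)"
    and ab: "a \<ge> 0" "b \<ge> 0" "a + b > 0"
  shows "FF S (a *\<^sub>R \<omega>0 + b *\<^sub>R \<omega>1) = FF S (a *\<^sub>R \<omega>0) + FF S (b *\<^sub>R \<omega>1)"
proof -
  define s where "s = a + b"
  have s: "s > 0" using ab by (simp add: s_def)
  have z: "\<omega>0 $ 3 = 1" "\<omega>1 $ 3 = 1" using mem Omega_z by auto
  define w where "w = (\<lambda>i::nat. if i = 0 then \<omega>0 else \<omega>1)"
  define p where "p = (\<lambda>i::nat. if i = 0 then a / s else b / s)"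
  have "S (\<Sum>i<2. p i *\<^sub>R w i) = (\<Sum>i<2. p i * S (w i)) - (\<Sum>i<2. plogp (p i))"
    using ent unfolding entropy_like_def
  proof (elim conjE allE impE)
    show "(\<forall>i<2. w i \<in> Omega n) \<and> perfectly_distinguishable n 2 w \<and> (\<forall>i<2. 0 \<le> p i) \<and> (\<Sum>i<2. p i) = 1"
      using mem pd ab s by (auto simp: w_def p_def less2 sum2 s_def add_divide_distrib[symmetric])
  qed
  then have E: "S ((a/s) *\<^sub>R \<omega>0 + (b/s) *\<^sub>R \<omega>1) = (a/s) * S \<omega>0 + (b/s) * S \<omega>1 - plogp (a/s) - plogp (b/s)"
    by (simp add: sum2 w_def p_def)
  have y3: "(a *\<^sub>R \<omega>0 + b *\<^sub>R \<omega>1) $ 3 = s" using z by (simp add: s_def)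
  have yn: "(1 / s) *\<^sub>R (a *\<^sub>R \<omega>0 + b *\<^sub>R \<omega>1) = (a/s) *\<^sub>R \<omega>0 + (b/s) *\<^sub>R \<omega>1"
    by (simp add: scaleR_add_right)
  have "FF S (a *\<^sub>R \<omega>0 + b *\<^sub>R \<omega>1) = s * ((a/s) * S \<omega>0 + (b/s) * S \<omega>1 - plogp (a/s) - plogp (b/s)) + hh s"
    unfolding FF_def y3 yn E ..
  also have "\<dots> = a * S \<omega>0 + b * S \<omega>1 - s * plogp (a/s) - s * plogp (b/s) + hh s"
    using s by (simp add: algebra_simps)
  also have "\<dots> = a * S \<omega>0 + b * S \<omega>1 + hh a + hh b"
  proof -
    have 1: "s * plogp (a/s) = plogp a - a * ln s" by (rule plogp_scale) (use s ab in auto)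
    have 2: "s * plogp (b/s) = plogp b - b * ln s" by (rule plogp_scale) (use s ab in auto)
    have 3: "hh s = - (s * ln s)" using s by (simp add: hh_def plogp_def)
    have 4: "a * ln s + b * ln s = s * ln s" by (simp add: s_def algebra_simps)
    show ?thesis unfolding 1 2 3 using 4 by (simp add: hh_def)
  qed
  also have "\<dots> = FF S (a *\<^sub>R \<omega>0) + FF S (b *\<^sub>R \<omega>1)"
    using z ab by (simp add: FF_scale)
  finally show ?thesis .
qed

lemma FF_pair_edge:
  assumes ent: "entropy_like n S" and ue: "unit_effect n = e3" and cv: "convex (Omega n)"
    and eff: "is_effect n e" and mem: "\<omega>0 \<in> Omega n" "u \<in> Omega n" "v \<in> Omega n"
    and ev: "e \<bullet> \<omega>0 = 0" "e \<bullet> u = 1" "e \<bullet> v = 1"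
    and co: "a \<ge> 0" "b \<ge> 0" "c \<ge> 0" "b + c > 0"
  shows "FF S (a *\<^sub>R \<omega>0 + (b *\<^sub>R u + c *\<^sub>R v)) = FF S (a *\<^sub>R \<omega>0) + FF S (b *\<^sub>R u + c *\<^sub>R v)"
proof -
  define t where "t = b + c"
  have t: "t > 0" using co by (simp add: t_def)
  define q where "q = (b/t) *\<^sub>R u + (c/t) *\<^sub>R v"
  have qm: "q \<in> Omega n" unfolding q_def
    using cv mem co t by (intro convexD) (auto simp: t_def add_divide_distrib[symmetric])
  have qe: "e \<bullet> q = 1" using ev t by (simp add: q_def inner_add_right t_def add_divide_distrib[symmetric])
  have tq: "b *\<^sub>R u + c *\<^sub>R v = t *\<^sub>R q" using t by (simp add: q_def scaleR_add_right)
  have pd: "perfectly_distinguishable n 2 (\<lambda>i. if i = 0 then \<omega>0 else q)"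
    by (rule dist2[OF eff mem(1) qm ev(1) qe ue])
  show ?thesis unfolding tq
    by (rule FF_add[OF ent mem(1) qm pd co(1)]) (use t co in auto)
qed

lemma ln_quad: fixes y :: real assumes "0 < y" "y \<le> 1" shows "ln y \<le> (y - 1) - (y - 1)^2/2"
proof -
  let ?f = "\<lambda>t::real. ln t - (t - 1) + (t - 1)^2/2"
  have "?f y \<le> ?f 1"
  proof (rule DERIV_nonneg_imp_increasing_open[OF assms(2)])
    fix t assume t: "y < t" "t < 1"
    then have tp: "t > 0" using assms by simp
    have "DERIV ?f t :> 1/t - 1 + (t - 1)"
      using tp by (auto intro!: derivative_eq_intros simp: field_simps)
    moreover have "1/t - 1 + (t - 1) \<ge> 0"
    proof -
      have "1/t - 1 + (t - 1) = (t - 1)^2 / t" using tp by (simp add: field_simps power2_eq_square)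
      then show ?thesis using tp by simp
    qed
    ultimately show "\<exists>d. DERIV ?f t :> d \<and> d \<ge> 0" by blast
  next
    show "continuous_on {y..1} ?f"
      using assms by (auto intro!: continuous_intros)
  qed
  then show ?thesis by simp
qed

lemma ln_ge_inv: fixes y :: real assumes "0 < y" shows "1 - 1/y \<le> ln y"
proof -
  have "ln (1/y) \<le> 1/y - 1" using assms by (intro ln_le_minus_one) simp
  then show ?thesis using assms by (simp add: ln_div)
qed

lemma hh_pos: "t > 0 \<Longrightarrow> hh t = - (t * ln t)" by (simp add: hh_def plogp_def)

lemma odd_ineq:
  assumes "0 < x" "x < 1"
  shows "hh (x + (1 - x)) - hh x \<noteq> hh (1 + (1 - x) * x) + hh (1 - x) - hh ((1 - x) * x)"
proof -
  define u where "u = x * (1 - x)"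
  have u: "u > 0" using assms by (simp add: u_def)
  have lu: "ln u = ln x + ln (1 - x)" using assms by (simp add: u_def ln_mult_pos)
  have g: "hh 1 - hh x - (hh (1 + u) + hh (1 - x) - hh u)
      = x^2 * ln x + (1 - x)^2 * ln (1 - x) + (1 + u) * ln (1 + u)"
  proof -
    have h1: "hh (1+u) = -((1+u) * ln (1+u))" using u by (simp add: hh_pos)
    have h2: "hh x = -(x * ln x)" using assms by (simp add: hh_pos)
    have h3: "hh (1-x) = -((1-x) * ln (1-x))" using assms by (simp add: hh_pos)
    have h4: "hh u = -(u * ln u)" using u by (simp add: hh_pos)
    have "u * ln u = x * (1 - x) * ln x + x * (1 - x) * ln (1 - x)"
      unfolding lu by (simp add: u_def algebra_simps)
    then show ?thesis unfolding h1 h2 h3 h4 by (simp add: power2_eq_square algebra_simps)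
  qed
  have b1: "x^2 * ln x \<le> x^2 * ((x - 1) - (x - 1)^2/2)"
    using ln_quad[of x] assms by (intro mult_left_mono) auto
  have b2: "(1 - x)^2 * ln (1 - x) \<le> (1 - x)^2 * (((1 - x) - 1) - ((1 - x) - 1)^2/2)"
    using ln_quad[of "1 - x"] assms by (intro mult_left_mono) auto
  have b3: "(1 + u) * ln (1 + u) < (1 + u) * u"
    using ln_add_one_self_less_self[OF u] u by (intro mult_strict_left_mono) auto
  have e: "x^2 * ((x - 1) - (x - 1)^2/2) + (1 - x)^2 * (((1 - x) - 1) - ((1 - x) - 1)^2/2) + (1 + u) * u = 0"
    by (simp add: u_def power2_eq_square field_simps)
  have "hh 1 - hh x - (hh (1 + u) + hh (1 - x) - hh u) < 0"
    unfolding g using b1 b2 b3 e by linarith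
  then show ?thesis by (simp add: u_def mult.commute)
qed

lemma even_ineq:
  assumes "0 \<le> x" "x < 1"
  shows "hh (1 + 1) - hh 1 \<noteq> hh (1 + 1 * x) + hh 1 - hh (1 * x)"
proof (cases "x = 0")
  case True
  have "hh 2 < 0" by (simp add: hh_pos)
  then show ?thesis using True by simp
next
  case False
  then have x: "x > 0" using assms by simp
  have b1: "x * (1 - (1 + x)/(2*x)) \<le> x * (ln 2 + ln x - ln (1 + x))"
  proof -
    have "1 - 1/(2*x/(1+x)) \<le> ln (2*x/(1+x))" using x by (intro ln_ge_inv) simp
    then have "1 - (1 + x)/(2*x) \<le> ln 2 + ln x - ln (1 + x)"
      using x by (simp add: ln_div ln_mult_pos)
    then show ?thesis using x by (intro mult_left_mono) auto
  qed
  have b2: "1 - (1 + x)/2 \<le> ln 2 - ln (1 + x)"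
  proof -
    have "1 - 1/(2/(1+x)) \<le> ln (2/(1+x))" using x by (intro ln_ge_inv) simp
    then show ?thesis using x by (simp add: ln_div)
  qed
  have e: "x * (1 - (1 + x)/(2*x)) = (x - 1)/2" using x by (simp add: field_simps)
  have l2: "ln (2::real) > 0" by simp
  have "(1 + x) * ln (1 + x) - x * ln x < 2 * ln 2"
  proof -
    have "(1 + x) * ln (1 + x) - x * ln x - 2 * ln 2
        = - (x * (ln 2 + ln x - ln (1 + x)) + (ln 2 - ln (1 + x))) - (1 - x) * ln 2"
      by (simp add: algebra_simps)
    also have "\<dots> \<le> - ((x - 1)/2 + (1 - (1 + x)/2)) - (1 - x) * ln 2"
      using b1 b2 e by linarith
    also have "\<dots> < 0" using assms l2 by (simp add: field_simps)
    finally show ?thesis by simp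
  qed
  then show ?thesis using x by (simp add: hh_pos)
qed

lemma core:
  assumes ent: "entropy_like n S" and ue: "unit_effect n = e3" and cv: "convex (Omega n)"
  and mem: "A \<in> Omega n" "B \<in> Omega n" "C \<in> Omega n" "P \<in> Omega n" "V \<in> Omega n"
  and pure: "S A = 0" "S P = 0" "S V = 0"
  and effp: "is_effect n Ep" "Ep \<bullet> A = 1" "Ep \<bullet> B = 1" "Ep \<bullet> V = 0"
  and effm: "is_effect n Em" "Em \<bullet> A = 1" "Em \<bullet> C = 1" "Em \<bullet> P = 0"
  and x: "0 \<le> x" "x \<le> 1" and sg: "\<sigma> > 0" and x': "0 \<le> x'" "\<sigma> * x' \<le> 1"
  and r1: "A + P = x *\<^sub>R V + ((1 - x) *\<^sub>R A + B)"
  and r2: "A + \<sigma> *\<^sub>R V = (\<sigma> * x') *\<^sub>R P + ((1 - \<sigma> * x') *\<^sub>R A + \<sigma> *\<^sub>R C)"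
  shows "hh (x + \<sigma>) - hh x = hh (1 + \<sigma> * x') + hh \<sigma> - hh (\<sigma> * x')"
proof -
  have z: "A$3 = 1" "B$3 = 1" "C$3 = 1" "P$3 = 1" "V$3 = 1" using mem Omega_z by auto
  have FA: "FF S A = 0" using FF_scale[of A 1 S] z pure by simp
  have FP: "FF S P = 0" using FF_scale[of P 1 S] z pure by simp
  have FV: "FF S (l *\<^sub>R V) = hh l" if "l \<ge> 0" for l using FF_scale[of V l S] z pure that by simp
  have FP': "FF S (l *\<^sub>R P) = hh l" if "l \<ge> 0" for l using FF_scale[of P l S] z pure that by simp
  note PEp = FF_pair_edge[OF ent ue cv effp(1) mem(5) mem(1) mem(2) effp(4) effp(2) effp(3)]
  note PEm = FF_pair_edge[OF ent ue cv effm(1) mem(4) mem(1) mem(3) effm(4) effm(2) effm(3)]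
  define a1 where "a1 = FF S ((1 - x) *\<^sub>R A + 1 *\<^sub>R B)"
  define a2 where "a2 = FF S ((1 - \<sigma> * x') *\<^sub>R A + \<sigma> *\<^sub>R C)"
  have E1: "FF S (1 *\<^sub>R P + (1 *\<^sub>R A + 0 *\<^sub>R C)) = FF S (1 *\<^sub>R P) + FF S (1 *\<^sub>R A + 0 *\<^sub>R C)"
    by (rule PEm) auto
  then have E1': "FF S (A + P) = 0" using FA FP by (simp add: add.commute)
  have E2: "FF S (x *\<^sub>R V + ((1 - x) *\<^sub>R A + 1 *\<^sub>R B)) = FF S (x *\<^sub>R V) + a1"
    unfolding a1_def by (rule PEp) (use x in auto)
  have A1: "a1 = - hh x" using E2 E1' r1 FV[of x] x by simp
  have E3: "FF S (\<sigma> *\<^sub>R V + (1 *\<^sub>R A + 0 *\<^sub>R B)) = FF S (\<sigma> *\<^sub>R V) + FF S (1 *\<^sub>R A + 0 *\<^sub>R B)"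
    by (rule PEp) (use sg in auto)
  then have E3': "FF S (A + \<sigma> *\<^sub>R V) = hh \<sigma>" using FA FV[of \<sigma>] sg by (simp add: add.commute)
  have E4: "FF S ((\<sigma> * x') *\<^sub>R P + ((1 - \<sigma> * x') *\<^sub>R A + \<sigma> *\<^sub>R C)) = FF S ((\<sigma> * x') *\<^sub>R P) + a2"
    unfolding a2_def by (rule PEm) (use sg x' in auto)
  have A2: "a2 = hh \<sigma> - hh (\<sigma> * x')" using E4 E3' r2 FP'[of "\<sigma> * x'"] sg x' by simp
  have E5: "FF S ((x + \<sigma>) *\<^sub>R V + ((1 - x) *\<^sub>R A + 1 *\<^sub>R B)) = FF S ((x + \<sigma>) *\<^sub>R V) + a1"
    unfolding a1_def by (rule PEp) (use x sg in auto)
  have E6: "FF S ((1 + \<sigma> * x') *\<^sub>R P + ((1 - \<sigma> * x') *\<^sub>R A + \<sigma> *\<^sub>R C)) = FF S ((1 + \<sigma> * x') *\<^sub>R P) + a2"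
    unfolding a2_def by (rule PEm) (use sg x' in auto)
  have pt: "(x + \<sigma>) *\<^sub>R V + ((1 - x) *\<^sub>R A + 1 *\<^sub>R B) = (1 + \<sigma> * x') *\<^sub>R P + ((1 - \<sigma> * x') *\<^sub>R A + \<sigma> *\<^sub>R C)"
  proof -
    have "(x + \<sigma>) *\<^sub>R V + ((1 - x) *\<^sub>R A + 1 *\<^sub>R B) = (x *\<^sub>R V + ((1 - x) *\<^sub>R A + B)) + \<sigma> *\<^sub>R V"
      by (simp add: scaleR_add_left algebra_simps)
    also have "\<dots> = P + (A + \<sigma> *\<^sub>R V)" using r1 by (simp add: algebra_simps)
    also have "\<dots> = (1 + \<sigma> * x') *\<^sub>R P + ((1 - \<sigma> * x') *\<^sub>R A + \<sigma> *\<^sub>R C)"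
      unfolding r2 by (simp add: scaleR_add_left algebra_simps)
    finally show ?thesis .
  qed
  have "hh (x + \<sigma>) + a1 = hh (1 + \<sigma> * x') + a2"
    using E5 E6 pt FV[of "x + \<sigma>"] FP'[of "1 + \<sigma> * x'"] x sg x' by simp
  then show ?thesis using A1 A2 by simp
qed

lemma cos_le_delta:
  fixes d t :: real
  assumes "0 < d" "d \<le> t" "t \<le> 2*pi - d"
  shows "cos t \<le> cos d"
proof (cases "t \<le> pi")
  case True then show ?thesis using assms by (intro cos_monotone_0_pi_le) auto
next
  case False
  have "cos t = cos (2*pi - t)" by simp
  also have "\<dots> \<le> cos d" using assms False by (intro cos_monotone_0_pi_le) auto
  finally show ?thesis .
qed

lemma cos_ge_neg_delta:
  fixes d t :: real
  assumes "0 < d" "d \<le> pi" "0 \<le> t" "t \<le> 2*pi" "t \<le> pi - d \<or> pi + d \<le> t"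
  shows "- cos d \<le> cos t"
proof (cases "t \<le> pi - d")
  case True
  have "cos (pi - d) \<le> cos t" using assms True by (intro cos_monotone_0_pi_le) auto
  then show ?thesis by simp
next
  case False
  then have t: "pi + d \<le> t" using assms by auto
  have "cos (pi - d) \<le> cos (2*pi - t)" using assms t by (intro cos_monotone_0_pi_le) auto
  then show ?thesis by simp
qed

lemma vertex_mem: "i < m \<Longrightarrow> polygon_vertex m i \<in> Omega (enat m)"
  unfolding Omega_fin by (rule hull_inc) blast

lemma cos_vertex_lt1:
  assumes "i < m" "k < m" "i \<noteq> k"
  shows "cos (2 * pi * real i / real m - 2 * pi * real k / real m) < 1"
proof -
  have "cos (2 * pi * real i / real m - 2 * pi * real k / real m) \<noteq> 1"
  proof
    assume "cos (2 * pi * real i / real m - 2 * pi * real k / real m) = 1"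
    then obtain n :: int where n: "2 * pi * real i / real m - 2 * pi * real k / real m = n * 2 * pi"
      by (auto simp: cos_one_2pi_int)
    have m: "real m > 0" using assms by simp
    have "real i - real k = real_of_int n * real m"
    proof -
      have h: "2 * pi * (real i - real k) = 2 * pi * (real_of_int n * real m)"
        using n m by (simp add: field_simps)
      have "2 * pi \<noteq> 0" by simp
      then show ?thesis using h mult_cancel_left[of "2*pi"] by blast
    qed
    then have e: "int i - int k = n * int m"
      by (metis of_int_eq_iff of_int_mult of_int_of_nat_eq of_int_diff)
    have "n \<noteq> 0" using e assms by auto
    then have "\<bar>n\<bar> * int m \<ge> int m" using assms by (simp add: mult_le_cancel_right1)
    moreover have "\<bar>int i - int k\<bar> < int m" using assms by auto
    ultimately show False using e by (simp add: abs_mult)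
  qed
  then show ?thesis using cos_le_one le_less by blast
qed

lemma vertex_pure:
  assumes "m \<ge> 3" "k < m"
  shows "polygon_vertex m k \<in> pure_states (enat m)"
proof -
  define V where "V = {polygon_vertex m i | i. i < m}"
  define v where "v = polygon_vertex m k"
  define r where "r = polygon_radius m"
  have r: "r > 0" using radius_pos[OF assms(1)] by (simp add: r_def)
  define l :: "real^3" where "l = vector [cos (2 * pi * real k / real m), sin (2 * pi * real k / real m), 0]"
  have lv: "l \<bullet> polygon_vertex m i = r * cos (2 * pi * real i / real m - 2 * pi * real k / real m)" for i
    by (simp add: l_def inner3 pv_comp r_def cos_diff algebra_simps)
  have "convex hull (V - {v}) \<subseteq> {x. l \<bullet> x < r}"
  proof (rule hull_minimal)
    show "V - {v} \<subseteq> {x. l \<bullet> x < r}"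
    proof
      fix x assume "x \<in> V - {v}"
      then obtain i where i: "i < m" "x = polygon_vertex m i" "i \<noteq> k" by (auto simp: V_def v_def)
      then show "x \<in> {x. l \<bullet> x < r}" using cos_vertex_lt1[OF i(1) assms(2) i(3)] r
        by (simp add: lv)
    qed
  qed (rule convex_halfspace_lt)
  moreover have "l \<bullet> v = r" by (simp add: v_def lv)
  ultimately have nv: "v \<notin> convex hull (V - {v})" by auto
  have "v extreme_point_of (convex hull (insert v (V - {v})))"
    by (rule extreme_point_of_convex_hull_insert) (use nv in \<open>auto simp: V_def\<close>)
  moreover have "insert v (V - {v}) = V" using assms by (auto simp: V_def v_def)
  ultimately show ?thesis by (simp add: pure_states_def Omega_fin V_def v_def)
qed

definition peff :: "nat \<Rightarrow> real \<Rightarrow> real \<Rightarrow> real \<Rightarrow> real^3" where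
  "peff m \<phi> hi L = (1 / (polygon_radius m * (hi + L))) *\<^sub>R vector [cos \<phi>, sin \<phi>, polygon_radius m * L]"

lemma peff_val:
  assumes "m \<ge> 3" "hi + L > 0"
  shows "peff m \<phi> hi L \<bullet> polygon_vertex m i = (cos (2 * pi * real i / real m - \<phi>) + L) / (hi + L)"
proof -
  have r: "polygon_radius m > 0" using radius_pos[OF assms(1)] .
  define t where "t = 2 * pi * real i / real m"
  define r where "r = polygon_radius m"
  have "peff m \<phi> hi L \<bullet> polygon_vertex m i = (1 / (r * (hi + L))) * (r * (cos t * cos \<phi> + sin t * sin \<phi> + L))"
    by (simp add: peff_def inner3 pv_comp t_def r_def algebra_simps)
  also have "\<dots> = (cos (t - \<phi>) + L) / (hi + L)"
    using r assms(2) by (simp add: cos_diff r_def)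
  finally show ?thesis by (simp add: t_def)
qed

lemma peff_effect:
  assumes "m \<ge> 3" "hi + L > 0"
    and "\<And>i. i < m \<Longrightarrow> - L \<le> cos (2 * pi * real i / real m - \<phi>) \<and> cos (2 * pi * real i / real m - \<phi>) \<le> hi"
  shows "is_effect (enat m) (peff m \<phi> hi L)"
proof (rule effect_fin)
  fix i assume i: "i < m"
  have b: "- L \<le> cos (2 * pi * real i / real m - \<phi>)" "cos (2 * pi * real i / real m - \<phi>) \<le> hi"
    using assms(3)[OF i] by auto
  show "0 \<le> peff m \<phi> hi L \<bullet> polygon_vertex m i \<and> peff m \<phi> hi L \<bullet> polygon_vertex m i \<le> 1"
    unfolding peff_val[OF assms(1,2)] using b assms(2) by (auto simp: divide_simps)
qed

lemma no_entropy:
  assumes m4: "m \<ge> 4" and ent: "entropy_like (enat m) S"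
  shows False
proof -
  have m3: "m \<ge> 3" using m4 by simp
  have mr: "real m \<ge> 4" using m4 by simp
  have mne: "real m \<noteq> 0" using m4 by simp
  have mne': "m \<noteq> 0" using m4 by simp
  define d where "d = pi / real m"
  define r where "r = polygon_radius m"
  define c where "c = cos d"
  define s where "s = sin d"
  have r: "r > 0" using radius_pos[OF m3] by (simp add: r_def)
  have d0: "0 < d" using mr by (simp add: d_def)
  have d4: "d \<le> pi / 4" unfolding d_def using mr by (intro divide_left_mono) auto
  have dpi: "d \<le> pi" using d4 d0 pi_gt_zero by linarith
  have c_lt1: "c < 1"
  proof -
    have "cos d < cos 0" using d0 d4 by (intro cos_monotone_0_pi) auto
    then show ?thesis by (simp add: c_def)
  qed
  have c_half: "c > 1/2"
  proof -
    have "cos (pi/3) < cos d" using d0 d4 by (intro cos_monotone_0_pi) auto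
    then show ?thesis by (simp add: c_def cos_60)
  qed
  have c2: "cos (2*d) = 2 * c^2 - 1" by (simp add: c_def cos_double_cos)
  have s2: "sin (2*d) = 2 * s * c" by (simp add: s_def c_def sin_double)
  have c2b: "0 \<le> cos (2*d)" "cos (2*d) < 1"
  proof -
    show "0 \<le> cos (2*d)" using d0 d4 by (intro cos_ge_zero) auto
    have "cos (2*d) < cos 0" using d0 d4 by (intro cos_monotone_0_pi) auto
    then show "cos (2*d) < 1" by simp
  qed
  have ue: "unit_effect (enat m) = e3" by (rule unit_effect_fin[OF m3])
  have cv: "convex (Omega (enat m))" by (simp add: Omega_fin)
  have pure: "S (polygon_vertex m k) = 0" if "k < m" for k
    using ent vertex_pure[OF m3 that] by (simp add: entropy_like_def)
  define A where "A = polygon_vertex m 0"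
  define B where "B = polygon_vertex m 1"
  define C where "C = polygon_vertex m (m - 1)"
  have a0: "2 * pi * real (0::nat) / real m = 0" by simp
  have a1: "2 * pi * real (1::nat) / real m = 2 * d" by (simp add: d_def)
  have am: "2 * pi * real (m - 1) / real m = 2 * pi - 2 * d"
    using m4 by (simp add: d_def of_nat_diff field_simps)
  have Ac: "A$1 = r" "A$2 = 0" "A$3 = 1" by (simp_all only: A_def pv_comp a0) (simp_all add: r_def)
  have Bc: "B$1 = r * cos (2*d)" "B$2 = r * sin (2*d)" "B$3 = 1"
    by (simp_all only: B_def pv_comp a1) (simp_all add: r_def)
  have Cc: "C$1 = r * cos (2*d)" "C$2 = - r * sin (2*d)" "C$3 = 1"
    by (simp_all only: C_def pv_comp am) (simp_all add: r_def sin_diff)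
  have memA: "A \<in> Omega (enat m)" "B \<in> Omega (enat m)" "C \<in> Omega (enat m)"
    using m4 by (auto simp: A_def B_def C_def intro!: vertex_mem)
  have pureA: "S A = 0" using pure[of 0] m4 by (simp add: A_def)
  have upP: "cos (2 * pi * real i / real m - d) \<le> c" if "i < m" for i
  proof (cases "i = 0")
    case True then show ?thesis by (simp add: c_def)
  next
    case False
    have eq: "2 * pi * real i / real m - d = (2 * real i - 1) * d" by (simp add: mne mne' d_def field_simps)
    have t1: "(2 * real i - 1) * d \<ge> 1 * d" using False d0 by (intro mult_right_mono) auto
    have "(2 * real i - 1) * d \<le> (2 * real m - 3) * d" using that d0 by (intro mult_right_mono) auto
    moreover have "(2 * real m - 3) * d \<le> 2 * pi - d" using mr d0 by (simp add: mne mne' d_def field_simps)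
    ultimately have t2: "(2 * real i - 1) * d \<le> 2 * pi - d" by linarith
    show ?thesis unfolding eq c_def using t1 t2 d0 cos_le_delta by simp
  qed
  have upM: "cos (2 * pi * real i / real m - - d) \<le> c" if "i < m" for i
  proof -
    have eq: "2 * pi * real i / real m - - d = (2 * real i + 1) * d" by (simp add: mne mne' d_def field_simps)
    have t1: "(2 * real i + 1) * d \<ge> 1 * d" using d0 by (intro mult_right_mono) auto
    have "(2 * real i + 1) * d \<le> (2 * real m - 1) * d" using that d0 by (intro mult_right_mono) auto
    moreover have "(2 * real m - 1) * d = 2 * pi - d" using mr by (simp add: mne mne' d_def field_simps)
    ultimately have t2: "(2 * real i + 1) * d \<le> 2 * pi - d" by linarith
    show ?thesis unfolding eq c_def using t1 t2 d0 cos_le_delta by simp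
  qed
  have cd: "cos (- d) = c" "sin (- d) = - s" by (simp_all add: c_def s_def)
  consider (odd) j where "m = 2 * j + 1" | (even) j where "m = 2 * j"
    by (metis dvd_mult_div_cancel odd_two_times_div_two_succ even_iff_mod_2_eq_zero mod2_eq_if)
  then show False
  proof cases
    case odd
    define P where "P = polygon_vertex m j"
    define V where "V = polygon_vertex m (j + 1)"
    have j: "j < m" "j + 1 < m" using odd m4 by auto
    have aj: "2 * pi * real j / real m = pi - d" using odd by (simp add: mne mne' d_def field_simps)
    have aj1: "2 * pi * real (j + 1) / real m = pi + d" using odd by (simp add: mne mne' d_def field_simps)
    have Pc: "P$1 = - r * c" "P$2 = r * s" "P$3 = 1"
      by (simp_all only: P_def pv_comp aj) (simp_all add: r_def c_def s_def)
    have Vc: "V$1 = - r * c" "V$2 = - r * s" "V$3 = 1"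
      by (simp_all only: V_def pv_comp aj1) (simp_all add: r_def c_def s_def)
    define Ep where "Ep = peff m d c 1"
    define Em where "Em = peff m (- d) c 1"
    have cL: "c + 1 > 0" using c_half by simp
    have effp: "is_effect (enat m) Ep" unfolding Ep_def
      by (rule peff_effect[OF m3 cL]) (use upP in auto)
    have effm: "is_effect (enat m) Em" unfolding Em_def
      by (rule peff_effect[OF m3 cL]) (use upM in auto)
    have Epv: "Ep \<bullet> A = 1" "Ep \<bullet> B = 1" "Ep \<bullet> V = 0"
      unfolding Ep_def A_def B_def V_def peff_val[OF m3 cL] a0 a1 aj1 using cL
      by (simp_all add: c_def)
    have Emv: "Em \<bullet> A = 1" "Em \<bullet> C = 1" "Em \<bullet> P = 0"
      unfolding Em_def A_def C_def P_def peff_val[OF m3 cL] a0 am aj using cL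
      by (simp_all add: c_def)
    define x where "x = 2 * c - 1"
    have x: "0 < x" "x < 1" using c_half c_lt1 by (auto simp: x_def)
    have r1: "A + P = x *\<^sub>R V + ((1 - x) *\<^sub>R A + B)"
      unfolding vec3_eq by (simp add: Ac Bc[unfolded c2 s2] Pc Vc x_def algebra_simps power2_eq_square)
    have r2: "A + (1 - x) *\<^sub>R V = ((1 - x) * x) *\<^sub>R P + ((1 - (1 - x) * x) *\<^sub>R A + (1 - x) *\<^sub>R C)"
      unfolding vec3_eq by (simp add: Ac Cc[unfolded c2 s2] Pc Vc x_def algebra_simps power2_eq_square)
    have "hh (x + (1 - x)) - hh x = hh (1 + (1 - x) * x) + hh (1 - x) - hh ((1 - x) * x)"
    proof (rule core[OF ent ue cv memA(1) memA(2) memA(3) _ _ pureA _ _ effp Epv effm Emv _ _ _ _ _ r1 r2])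
      show "P \<in> Omega (enat m)" "V \<in> Omega (enat m)" using j by (auto simp: P_def V_def intro!: vertex_mem)
      show "S P = 0" "S V = 0" using j pure by (auto simp: P_def V_def)
      show "0 \<le> x" "x \<le> 1" "0 < 1 - x" "0 \<le> x" using x by auto
      show "(1 - x) * x \<le> 1" using x by (intro mult_le_one) auto
    qed
    then show False using odd_ineq[OF x] by simp
  next
    case even
    define P where "P = polygon_vertex m j"
    define V where "V = polygon_vertex m (j + 1)"
    have j: "j < m" "j + 1 < m" using even m4 by auto
    have aj: "2 * pi * real j / real m = pi" using even m4 by (simp add: field_simps)
    have j0: "j > 0" using even m4 by simp
    have aj1: "2 * pi * real (j + 1) / real m = pi + 2 * d" using even j0 by (simp add: mne mne' d_def field_simps)
    have Pc: "P$1 = - r" "P$2 = 0" "P$3 = 1"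
      by (simp_all only: P_def pv_comp aj) (simp_all add: r_def)
    have Vc: "V$1 = - r * cos (2*d)" "V$2 = - r * sin (2*d)" "V$3 = 1"
      by (simp_all only: V_def pv_comp aj1) (simp_all add: r_def)
    define Ep where "Ep = peff m d c c"
    define Em where "Em = peff m (- d) c c"
    have cL: "c + c > 0" using c_half by simp
    have jj: "real m = 2 * real j" using even by simp
    have loP: "- c \<le> cos (2 * pi * real i / real m - d)" if "i < m" for i
    proof (cases "i = 0")
      case True then show ?thesis using c_half by (simp add: c_def)
    next
      case False
      have eq: "2 * pi * real i / real m - d = (2 * real i - 1) * d" by (simp add: mne mne' d_def field_simps)
      have "(2 * real i - 1) * d \<le> pi - d \<or> pi + d \<le> (2 * real i - 1) * d"
      proof (cases "i \<le> j")
        case True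
        have "(2 * real i - 1) * d \<le> (real m - 1) * d" using True d0 jj by (intro mult_right_mono) auto
        then show ?thesis using mr by (simp add: mne mne' d_def field_simps)
      next
        case False
        have "(2 * real i - 1) * d \<ge> (real m + 1) * d" using False d0 jj by (intro mult_right_mono) auto
        then show ?thesis using mr by (simp add: mne mne' d_def field_simps)
      qed
      moreover have "0 \<le> (2 * real i - 1) * d" using False d0 by simp
      moreover have "(2 * real i - 1) * d \<le> 2 * pi"
      proof -
        have "(2 * real i - 1) * d \<le> (2 * real m) * d" using d0 that by (intro mult_right_mono) auto
        then show ?thesis using mr by (simp add: mne mne' d_def field_simps)
      qed
      ultimately show ?thesis unfolding eq c_def using d0 dpi cos_ge_neg_delta by blast
    qed
    have loM: "- c \<le> cos (2 * pi * real i / real m - - d)" if "i < m" for i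
    proof -
      have eq: "2 * pi * real i / real m - - d = (2 * real i + 1) * d" by (simp add: mne mne' d_def field_simps)
      have "(2 * real i + 1) * d \<le> pi - d \<or> pi + d \<le> (2 * real i + 1) * d"
      proof (cases "i < j")
        case True
        have "(2 * real i + 1) * d \<le> (real m - 1) * d" using True d0 jj by (intro mult_right_mono) auto
        then show ?thesis using mr by (simp add: mne mne' d_def field_simps)
      next
        case False
        have "(2 * real i + 1) * d \<ge> (real m + 1) * d" using False d0 jj by (intro mult_right_mono) auto
        then show ?thesis using mr by (simp add: mne mne' d_def field_simps)
      qed
      moreover have "0 \<le> (2 * real i + 1) * d" using d0 by simp
      moreover have "(2 * real i + 1) * d \<le> 2 * pi"
      proof -
        have "(2 * real i + 1) * d \<le> (2 * real m) * d" using d0 that by (intro mult_right_mono) auto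
        then show ?thesis using mr by (simp add: mne mne' d_def field_simps)
      qed
      ultimately show ?thesis unfolding eq c_def using d0 dpi cos_ge_neg_delta by blast
    qed
    have effp: "is_effect (enat m) Ep" unfolding Ep_def
      by (rule peff_effect[OF m3 cL]) (use upP loP in auto)
    have effm: "is_effect (enat m) Em" unfolding Em_def
      by (rule peff_effect[OF m3 cL]) (use upM loM in auto)
    have Epv: "Ep \<bullet> A = 1" "Ep \<bullet> B = 1" "Ep \<bullet> V = 0"
      unfolding Ep_def A_def B_def V_def peff_val[OF m3 cL] a0 a1 aj1 using cL
      by (simp_all add: c_def)
    have Emv: "Em \<bullet> A = 1" "Em \<bullet> C = 1" "Em \<bullet> P = 0"
      unfolding Em_def A_def C_def P_def peff_val[OF m3 cL] a0 am aj using cL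
      by (simp_all add: c_def)
    have r1: "A + P = 1 *\<^sub>R V + ((1 - 1) *\<^sub>R A + B)"
      unfolding vec3_eq by (simp add: Ac Bc Pc Vc)
    have r2: "A + 1 *\<^sub>R V = (1 * cos (2*d)) *\<^sub>R P + ((1 - 1 * cos (2*d)) *\<^sub>R A + 1 *\<^sub>R C)"
      unfolding vec3_eq by (simp add: Ac Cc Pc Vc algebra_simps)
    have "hh (1 + 1) - hh 1 = hh (1 + 1 * cos (2*d)) + hh 1 - hh (1 * cos (2*d))"
    proof (rule core[OF ent ue cv memA(1) memA(2) memA(3) _ _ pureA _ _ effp Epv effm Emv _ _ _ _ _ r1 r2])
      show "P \<in> Omega (enat m)" "V \<in> Omega (enat m)" using j by (auto simp: P_def V_def intro!: vertex_mem)
      show "S P = 0" "S V = 0" using j pure by (auto simp: P_def V_def)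
      show "0 \<le> (1::real)" "(1::real) \<le> 1" "0 < (1::real)" "0 \<le> cos (2*d)" "1 * cos (2*d) \<le> 1"
        using c2b by auto
    qed
    then show False using even_ineq[OF c2b] by simp
  qed
qed

definition Sdisc :: "real^3 \<Rightarrow> real" where
  "Sdisc v = (let \<rho> = sqrt ((v$1)^2 + (v$2)^2) in - plogp ((1 + \<rho>)/2) - plogp ((1 - \<rho>)/2))"

lemma disc_mem: "v \<in> Omega \<infinity> \<longleftrightarrow> v$3 = 1 \<and> (v$1)^2 + (v$2)^2 \<le> 1"
  by (simp add: Omega_def)

lemma disc_pure_norm:
  assumes "v \<in> pure_states \<infinity>" shows "(v$1)^2 + (v$2)^2 = 1"
proof (rule ccontr)
  assume ne: "(v$1)^2 + (v$2)^2 \<noteq> 1"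
  have ext: "v extreme_point_of Omega \<infinity>" using assms unfolding pure_states_def by blast
  then have vm: "v \<in> Omega \<infinity>" unfolding extreme_point_of_def by blast
  then have vv: "v$3 = 1 \<and> (v$1)^2 + (v$2)^2 \<le> 1" using disc_mem by blast
  then have lt: "(v$1)^2 + (v$2)^2 < 1" and v3: "v$3 = 1" using ne by auto
  define e where "e = (1 - ((v$1)^2 + (v$2)^2)) / 4"
  have e: "e > 0" "e \<le> 1/4" using lt zero_le_power2[of "v$1"] zero_le_power2[of "v$2"] unfolding e_def by (auto simp: field_simps)
  define w :: "real^3" where "w = vector [1, 0, 0]"
  define a where "a = v + e *\<^sub>R w"
  define b where "b = v - e *\<^sub>R w"
  have v1: "\<bar>v$1\<bar> \<le> 1"
  proof -
    have "(v$1)^2 \<le> 1" using lt zero_le_power2[of "v$2"] by linarith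
    then show ?thesis by (simp add: abs_square_le_1)
  qed
  have am: "a \<in> Omega \<infinity>"
  proof -
    have "(v$1 + e)^2 + (v$2)^2 = (v$1)^2 + (v$2)^2 + 2 * e * v$1 + e^2" by (simp add: power2_eq_square algebra_simps)
    also have "\<dots> \<le> (v$1)^2 + (v$2)^2 + 2 * e + e * (1/4)"
    proof -
      have "e * v$1 \<le> e * 1" using e v1 by (intro mult_left_mono) auto
      then have "2 * e * v$1 \<le> 2 * e" by simp
      moreover have "e^2 \<le> e * (1/4)" unfolding power2_eq_square using e by (intro mult_left_mono) auto
      ultimately show ?thesis by linarith
    qed
    also have "\<dots> \<le> 1" using e by (simp add: e_def field_simps)
    finally show ?thesis using v3 by (simp add: disc_mem a_def w_def)
  qed
  have bm: "b \<in> Omega \<infinity>"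
  proof -
    have "(v$1 - e)^2 + (v$2)^2 = (v$1)^2 + (v$2)^2 - 2 * e * v$1 + e^2" by (simp add: power2_eq_square algebra_simps)
    also have "\<dots> \<le> (v$1)^2 + (v$2)^2 + 2 * e + e * (1/4)"
    proof -
      have "e * (- v$1) \<le> e * 1" using e v1 by (intro mult_left_mono) auto
      then have "- 2 * e * v$1 \<le> 2 * e" by simp
      moreover have "e^2 \<le> e * (1/4)" unfolding power2_eq_square using e by (intro mult_left_mono) auto
      ultimately show ?thesis by linarith
    qed
    also have "\<dots> \<le> 1" using e by (simp add: e_def field_simps)
    finally show ?thesis using v3 by (simp add: disc_mem b_def w_def)
  qed
  have "a \<noteq> b" using e by (simp add: a_def b_def vec3_eq w_def)
  then have "midpoint a b \<in> open_segment a b" by simp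
  moreover have "midpoint a b = v" by (simp add: midpoint_def a_def b_def vec3_eq)
  ultimately have "v \<in> open_segment a b" by simp
  moreover have "\<forall>a\<in>Omega \<infinity>. \<forall>b\<in>Omega \<infinity>. v \<notin> open_segment a b"
    using ext unfolding extreme_point_of_def by blast
  ultimately show False using am bm by blast
qed

lemma Sdisc_pure: "(v$1)^2 + (v$2)^2 = 1 \<Longrightarrow> Sdisc v = 0"
  by (simp add: Sdisc_def plogp_def)

lemma aux_lin1: "X \<le> 1 \<Longrightarrow> 1 \<le> Y \<Longrightarrow> X - 2 * Y + 1 \<le> (0::real)" by linarith
lemma aux_lin2: "X \<le> 1 \<Longrightarrow> Y \<le> -1 \<Longrightarrow> X + 2 * Y + 1 \<le> (0::real)" by linarith

lemma disc_antipodal: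
  assumes eff: "is_effect \<infinity> e" and m: "\<omega>0 \<in> Omega \<infinity>" "\<omega>1 \<in> Omega \<infinity>"
    and ev: "e \<bullet> \<omega>0 = 1" "e \<bullet> \<omega>1 = 0"
  shows "(\<omega>0$1)^2 + (\<omega>0$2)^2 = 1" "\<omega>1$1 = - \<omega>0$1" "\<omega>1$2 = - \<omega>0$2"
proof -
  define a where "a = e$1"
  define b where "b = e$2"
  define c where "c = e$3"
  have inn: "e \<bullet> v = a * v$1 + b * v$2 + c" if "v \<in> Omega \<infinity>" for v
    using that by (simp add: inner3 a_def b_def c_def disc_mem)
  have z: "\<omega>0$3 = 1" "\<omega>1$3 = 1" "(\<omega>0$1)^2 + (\<omega>0$2)^2 \<le> 1" "(\<omega>1$1)^2 + (\<omega>1$2)^2 \<le> 1"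
    using m by (auto simp: disc_mem)
  define \<rho> where "\<rho> = sqrt (a^2 + b^2)"
  have \<rho>2: "\<rho>^2 = a^2 + b^2" by (simp add: \<rho>_def)
  have \<rho>0: "\<rho> \<noteq> 0"
  proof
    assume "\<rho> = 0"
    then have "a^2 + b^2 = 0" using \<rho>2 by simp
    then have "a = 0" "b = 0" by (simp_all add: sum_power2_eq_zero_iff)
    then show False using ev inn[OF m(1)] inn[OF m(2)] by simp
  qed
  have \<rho>ge: "\<rho> \<ge> 0" unfolding \<rho>_def by simp
  have \<rho>p: "\<rho> > 0" using \<rho>0 \<rho>ge by (simp add: order_less_le)
  define \<alpha> where "\<alpha> = a / \<rho>"
  define \<beta> where "\<beta> = b / \<rho>"
  have ab: "a = \<rho> * \<alpha>" "b = \<rho> * \<beta>" using \<rho>0 by (simp_all add: \<alpha>_def \<beta>_def)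
  have tn: "\<alpha>^2 + \<beta>^2 = 1"
  proof -
    have "\<rho>^2 * (\<alpha>^2 + \<beta>^2) = \<rho>^2 * 1" using \<rho>2 ab by (simp add: power_mult_distrib algebra_simps)
    then show ?thesis using \<rho>0 by simp
  qed
  define t :: "real^3" where "t = vector [\<alpha>, \<beta>, 1]"
  define t' :: "real^3" where "t' = vector [-\<alpha>, -\<beta>, 1]"
  have tm: "t \<in> Omega \<infinity>" "t' \<in> Omega \<infinity>" using tn by (auto simp: disc_mem t_def t'_def)
  have et: "e \<bullet> t \<le> 1" "e \<bullet> t' \<ge> 0" using eff tm by (auto simp: is_effect_def)
  have et1: "e \<bullet> t = \<rho> * (\<alpha>^2 + \<beta>^2) + c" unfolding inn[OF tm(1)] ab
    by (simp add: t_def power2_eq_square algebra_simps)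
  have et2: "e \<bullet> t' = - \<rho> * (\<alpha>^2 + \<beta>^2) + c" unfolding inn[OF tm(2)] ab
    by (simp add: t'_def power2_eq_square algebra_simps)
  have up: "\<rho> + c \<le> 1" using et et1 tn by simp
  have lo: "c - \<rho> \<ge> 0" using et et2 tn by simp
  have "\<rho> * (\<alpha> * \<omega>0$1 + \<beta> * \<omega>0$2) = 1 - c" using ev inn[OF m(1)] ab by (simp add: algebra_simps)
  then have "\<rho> * (\<alpha> * \<omega>0$1 + \<beta> * \<omega>0$2) \<ge> \<rho> * 1" using up by simp
  then have s0: "\<alpha> * \<omega>0$1 + \<beta> * \<omega>0$2 \<ge> 1" using \<rho>p by (simp add: mult_le_cancel_left_pos)
  have "\<rho> * (\<alpha> * \<omega>1$1 + \<beta> * \<omega>1$2) = - c" using ev inn[OF m(2)] ab by (simp add: algebra_simps)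
  then have "\<rho> * (\<alpha> * \<omega>1$1 + \<beta> * \<omega>1$2) \<le> \<rho> * (-1)" using lo by simp
  then have s1: "\<alpha> * \<omega>1$1 + \<beta> * \<omega>1$2 \<le> -1" using mult_le_cancel_left_pos[OF \<rho>p] by blast
  have q0: "(\<omega>0$1 - \<alpha>)^2 + (\<omega>0$2 - \<beta>)^2 = ((\<omega>0$1)^2 + (\<omega>0$2)^2) - 2 * (\<alpha> * \<omega>0$1 + \<beta> * \<omega>0$2) + (\<alpha>^2 + \<beta>^2)"
    by (simp add: power2_eq_square algebra_simps)
  have "(\<omega>0$1 - \<alpha>)^2 + (\<omega>0$2 - \<beta>)^2 \<le> 0" unfolding q0 tn by (rule aux_lin1[OF z(3) s0])
  then have w0: "\<omega>0$1 = \<alpha>" "\<omega>0$2 = \<beta>" by (simp_all add: sum_power2_le_zero_iff)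
  have q1: "(\<omega>1$1 + \<alpha>)^2 + (\<omega>1$2 + \<beta>)^2 = ((\<omega>1$1)^2 + (\<omega>1$2)^2) + 2 * (\<alpha> * \<omega>1$1 + \<beta> * \<omega>1$2) + (\<alpha>^2 + \<beta>^2)"
    by (simp add: power2_eq_square algebra_simps)
  have "(\<omega>1$1 + \<alpha>)^2 + (\<omega>1$2 + \<beta>)^2 \<le> 0" unfolding q1 tn by (rule aux_lin2[OF z(4) s1])
  then have w1: "\<omega>1$1 = - \<alpha>" "\<omega>1$2 = - \<beta>"
    by (simp_all add: sum_power2_le_zero_iff eq_neg_iff_add_eq_0)
  show "(\<omega>0$1)^2 + (\<omega>0$2)^2 = 1" using w0 tn by simp
  show "\<omega>1$1 = - \<omega>0$1" "\<omega>1$2 = - \<omega>0$2" using w0 w1 by simp_all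
qed

lemma disc_entropy: "entropy_like \<infinity> Sdisc"
  unfolding entropy_like_def
proof (intro conjI ballI allI impI)
  fix \<sigma> assume "\<sigma> \<in> pure_states \<infinity>"
  then show "Sdisc \<sigma> = 0" using disc_pure_norm Sdisc_pure by blast
next
  fix l and \<omega> :: "nat \<Rightarrow> real^3" and p :: "nat \<Rightarrow> real"
  assume H: "(\<forall>i<l. \<omega> i \<in> Omega \<infinity>) \<and> perfectly_distinguishable \<infinity> l \<omega> \<and> (\<forall>i<l. 0 \<le> p i) \<and> (\<Sum>i<l. p i) = 1"
  then have mem: "\<And>i. i < l \<Longrightarrow> \<omega> i \<in> Omega \<infinity>" and pd: "perfectly_distinguishable \<infinity> l \<omega>"
    and pp: "\<And>i. i < l \<Longrightarrow> 0 \<le> p i" and ps: "(\<Sum>i<l. p i) = 1" by auto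
  show "Sdisc (\<Sum>i<l. p i *\<^sub>R \<omega> i) = (\<Sum>i<l. p i * Sdisc (\<omega> i)) - (\<Sum>i<l. plogp (p i))"
  proof (cases "l \<le> 1")
    case True
    then consider "l = 0" | "l = 1" by linarith
    then show ?thesis
    proof cases
      case 1 then show ?thesis using ps by simp
    next
      case 2 then show ?thesis using ps by (simp add: plogp_def)
    qed
  next
    case False
    then have l2: "l \<ge> 2" by simp
    obtain e where eff: "\<And>i. i < l \<Longrightarrow> is_effect \<infinity> (e i)"
      and ed: "\<And>i j. i < l \<Longrightarrow> j < l \<Longrightarrow> e i \<bullet> \<omega> j = (if i = j then 1 else 0)"
      using pd unfolding perfectly_distinguishable_def by blast
    have ant: "(\<omega> 0$1)^2 + (\<omega> 0$2)^2 = 1" "\<omega> 1$1 = - \<omega> 0$1" "\<omega> 1$2 = - \<omega> 0$2"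
      using disc_antipodal[OF eff[of 0] mem[of 0] mem[of 1]] ed[of 0 0] ed[of 0 1] l2 by auto
    have l: "l = 2"
    proof (rule ccontr)
      assume "l \<noteq> 2"
      then have l3: "2 < l" using l2 by simp
      have a2: "\<omega> 2$1 = - \<omega> 0$1" "\<omega> 2$2 = - \<omega> 0$2"
        using disc_antipodal[OF eff[of 0] mem[of 0] mem[of 2]] ed[of 0 0] ed[of 0 2] l3 by auto
      have z: "\<omega> 1$3 = 1" "\<omega> 2$3 = 1" using mem[of 1] mem[of 2] l3 by (auto simp: disc_mem)
      have "\<omega> 2 = \<omega> 1" using a2 ant z by (simp add: vec3_eq)
      then show False using ed[of 1 1] ed[of 1 2] l3 by auto
    qed
    have z: "\<omega> 0$3 = 1" "\<omega> 1$3 = 1" using mem[of 0] mem[of 1] l by (auto simp: disc_mem)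
    have s0: "Sdisc (\<omega> 0) = 0" using ant by (intro Sdisc_pure) simp
    have s1: "Sdisc (\<omega> 1) = 0" using ant by (intro Sdisc_pure) simp
    define a where "a = p 0"
    have p1: "p 1 = 1 - a" using ps l by (simp add: sum2 a_def)
    have a: "0 \<le> a" "a \<le> 1" using pp[of 0] pp[of 1] p1 l by (auto simp: a_def)
    define u where "u = \<omega> 0"
    define v where "v = \<omega> 1"
    have ant': "(u$1)^2 + (u$2)^2 = 1" "v$1 = - u$1" "v$2 = - u$2" using ant by (simp_all add: u_def v_def)
    define y where "y = a *\<^sub>R u + (1 - a) *\<^sub>R v"
    have y1: "y$1 = (2*a - 1) * u$1" "y$2 = (2*a - 1) * u$2"
      by (simp_all add: y_def ant' algebra_simps)
    have y12: "(y$1)^2 + (y$2)^2 = (2*a - 1)^2"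
    proof -
      have "(y$1)^2 + (y$2)^2 = (2*a - 1)^2 * ((u$1)^2 + (u$2)^2)"
        unfolding y1 by (simp add: power2_eq_square algebra_simps)
      then show ?thesis using ant' by simp
    qed
    have Sy: "Sdisc y = - plogp a - plogp (1 - a)"
    proof (cases "a \<ge> 1/2")
      case True
      then have sq: "sqrt ((y$1)^2 + (y$2)^2) = 2*a - 1" unfolding y12 by simp
      have e1: "(1 + (2*a - 1))/2 = a" "(1 - (2*a - 1))/2 = 1 - a" by simp_all
      show ?thesis unfolding Sdisc_def Let_def sq e1 by simp
    next
      case False
      then have sq: "sqrt ((y$1)^2 + (y$2)^2) = 1 - 2*a" unfolding y12 by (simp add: power2_commute)
      have e1: "(1 + (1 - 2*a))/2 = 1 - a" "(1 - (1 - 2*a))/2 = a" by simp_all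
      show ?thesis unfolding Sdisc_def Let_def sq e1 by simp
    qed
    have p1s: "p (Suc 0) = 1 - a" using p1 by simp
    have vs: "\<omega> (Suc 0) = v" by (simp add: v_def)
    have "(\<Sum>i<l. p i *\<^sub>R \<omega> i) = y" unfolding l sum2 by (simp add: y_def a_def u_def vs p1s)
    then show ?thesis using Sy s0 s1 p1 unfolding l sum2 by (simp add: a_def)
  qed
qed

definition W3 :: "nat \<Rightarrow> real^3" where "W3 k = polygon_vertex 3 k"
definition qa :: real where "qa = sqrt 2"
definition qb :: real where "qb = sqrt 2 * sqrt 3 / 2"

lemma qaa: "qa * qa = 2" by (simp add: qa_def)
lemma qbb: "qb * qb = 3/2"
proof -
  have "qb * qb = (sqrt 2 * sqrt 2) * (sqrt 3 * sqrt 3) / 4" by (simp add: qb_def algebra_simps)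
  also have "\<dots> = 3/2" by simp
  finally show ?thesis .
qed

lemma qbb2: "qb * (qb * 2) = 3" using qbb by (simp add: mult.assoc[symmetric])

lemma r3: "polygon_radius 3 = qa"
  by (simp add: polygon_radius_def qa_def cos_60)

lemma trig3:
  "cos (2 * pi / 3) = - 1/2" "sin (2 * pi / 3) = sqrt 3 / 2"
  "cos (4 * pi / 3) = - 1/2" "sin (4 * pi / 3) = - sqrt 3 / 2"
proof -
  have e1: "pi - pi/3 = 2 * pi / 3" by simp
  have e2: "pi + pi/3 = 4 * pi / 3" by simp
  show "cos (2 * pi / 3) = - 1/2" using cos_pi_minus[of "pi/3", unfolded e1] cos_60 by simp
  show "sin (2 * pi / 3) = sqrt 3 / 2" using sin_pi_minus[of "pi/3", unfolded e1] sin_60 by simp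
  show "cos (4 * pi / 3) = - 1/2" using cos_periodic_pi2[of "pi/3", unfolded e2] cos_60 by simp
  show "sin (4 * pi / 3) = - sqrt 3 / 2" using sin_periodic_pi2[of "pi/3", unfolded e2] sin_60 by simp
qed

lemma W3c:
  "W3 0 $ 1 = qa" "W3 0 $ 2 = 0" "W3 0 $ 3 = 1"
  "W3 1 $ 1 = - qa / 2" "W3 1 $ 2 = qb" "W3 1 $ 3 = 1"
  "W3 2 $ 1 = - qa / 2" "W3 2 $ 2 = - qb" "W3 2 $ 3 = 1"
  by (simp_all add: W3_def pv_comp r3 trig3 qb_def qa_def)

lemma W3c_Suc:
  "W3 (Suc 0) $ 1 = - qa / 2" "W3 (Suc 0) $ 2 = qb" "W3 (Suc 0) $ 3 = 1"
  "W3 (Suc (Suc 0)) $ 1 = - qa / 2" "W3 (Suc (Suc 0)) $ 2 = - qb" "W3 (Suc (Suc 0)) $ 3 = 1"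
  by (simp_all only: One_nat_def[symmetric] Suc_1 W3c)

definition Lam :: "nat \<Rightarrow> real^3" where
  "Lam k = (1/3) *\<^sub>R vector [W3 k $ 1, W3 k $ 2, 1]"

lemma Lam_inner: "Lam k \<bullet> v = (W3 k $ 1 * v$1 + W3 k $ 2 * v$2 + v$3) / 3"
  by (simp add: Lam_def inner3 algebra_simps)

lemma less3: "k < (3::nat) \<longleftrightarrow> k = 0 \<or> k = 1 \<or> k = 2" by auto

lemma sum3: "(\<Sum>k<(3::nat). f k) = f 0 + f 1 + f 2"
  by (simp add: numeral_3_eq_3 numeral_2_eq_2 One_nat_def)

lemma Lam_W:
  assumes "k < 3" "j < 3"
  shows "Lam k \<bullet> W3 j = (if k = j then 1 else 0)"
  using assms unfolding less3 Lam_inner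
  by (elim disjE) (simp_all add: W3c W3c_Suc qaa qbb field_simps)

lemma Lam_sum: "(\<Sum>k<3. Lam k \<bullet> v) = v$3"
  unfolding sum3 Lam_inner by (simp add: W3c W3c_Suc field_simps)

lemma recon: "v = (\<Sum>k<3. (Lam k \<bullet> v) *\<^sub>R W3 k)"
  unfolding vec3_eq sum3 Lam_inner
  by (simp add: W3c W3c_Suc field_simps) (simp add: algebra_simps qaa qbb qbb2)

lemma Omega3: "Omega (enat 3) = convex hull {W3 0, W3 1, W3 2}"
proof -
  have "{polygon_vertex 3 i | i. i < 3} = {W3 0, W3 1, W3 2}"
    unfolding W3_def less3 by auto
  then show ?thesis by (simp add: Omega_fin)
qed

lemma W3_mem: "k < 3 \<Longrightarrow> W3 k \<in> Omega (enat 3)"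
  unfolding Omega3 less3 by (auto intro: hull_inc)

lemma Lam_nonneg: assumes "v \<in> Omega (enat 3)" "k < 3" shows "0 \<le> Lam k \<bullet> v"
proof -
  have "convex hull {W3 0, W3 1, W3 2} \<subseteq> {x. Lam k \<bullet> x \<ge> 0}"
    by (rule hull_minimal) (use assms(2) in \<open>auto simp: Lam_W intro: convex_halfspace_ge\<close>)
  then show ?thesis using assms(1) unfolding Omega3 by auto
qed

definition Stri :: "real^3 \<Rightarrow> real" where
  "Stri v = (\<Sum>k<3. hh (Lam k \<bullet> v))"

lemma hh_mult: assumes "0 \<le> a" "0 \<le> b" shows "hh (a * b) = a * hh b + b * hh a"
proof (cases "a = 0 \<or> b = 0")
  case True then show ?thesis by auto
next
  case False
  then have "a > 0" "b > 0" using assms by auto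
  then show ?thesis by (simp add: hh_def plogp_def ln_mult_pos algebra_simps)
qed

lemma hh_sum_disj:
  assumes "finite I" "\<And>i j. i \<in> I \<Longrightarrow> j \<in> I \<Longrightarrow> i \<noteq> j \<Longrightarrow> f i = 0 \<or> f j = 0"
  shows "hh (sum f I) = (\<Sum>i\<in>I. hh (f i))"
proof (cases "\<exists>i0\<in>I. f i0 \<noteq> 0")
  case True
  then obtain i0 where i0: "i0 \<in> I" "f i0 \<noteq> 0" by blast
  have z: "\<And>j. j \<in> I - {i0} \<Longrightarrow> f j = 0" using assms(2) i0 by blast
  have "sum f I = f i0 + sum f (I - {i0})" using assms(1) i0(1) by (rule sum.remove)
  also have "sum f (I - {i0}) = 0" using z by simp
  finally have s1: "sum f I = f i0" by simp
  have "(\<Sum>i\<in>I. hh (f i)) = hh (f i0) + (\<Sum>i\<in>I - {i0}. hh (f i))" using assms(1) i0(1) by (rule sum.remove)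
  also have "(\<Sum>i\<in>I - {i0}. hh (f i)) = 0" using z by simp
  finally show ?thesis using s1 by simp
next
  case False
  then show ?thesis by simp
qed

lemma tri_pure: "\<sigma> \<in> pure_states (enat 3) \<Longrightarrow> Stri \<sigma> = 0"
proof -
  assume "\<sigma> \<in> pure_states (enat 3)"
  then have "\<sigma> extreme_point_of (convex hull {W3 0, W3 1, W3 2})"
    by (simp add: pure_states_def Omega3)
  then have "\<sigma> \<in> {W3 0, W3 1, W3 2}" by (rule extreme_point_of_convex_hull)
  then obtain j where j: "j < 3" "\<sigma> = W3 j" unfolding less3 by auto
  show "Stri \<sigma> = 0" unfolding Stri_def sum3 j(2) using j(1)
    by (simp add: Lam_W)
qed

lemma tri_entropy: "entropy_like (enat 3) Stri"
  unfolding entropy_like_def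
proof (intro conjI ballI allI impI)
  fix \<sigma> assume "\<sigma> \<in> pure_states (enat 3)"
  then show "Stri \<sigma> = 0" by (rule tri_pure)
next
  fix l and \<omega> :: "nat \<Rightarrow> real^3" and p :: "nat \<Rightarrow> real"
  assume H: "(\<forall>i<l. \<omega> i \<in> Omega (enat 3)) \<and> perfectly_distinguishable (enat 3) l \<omega> \<and> (\<forall>i<l. 0 \<le> p i) \<and> (\<Sum>i<l. p i) = 1"
  then have mem: "\<And>i. i < l \<Longrightarrow> \<omega> i \<in> Omega (enat 3)" and pd: "perfectly_distinguishable (enat 3) l \<omega>"
    and pp: "\<And>i. i < l \<Longrightarrow> 0 \<le> p i" and ps: "(\<Sum>i<l. p i) = 1" by auto
  obtain e where eff: "\<And>i. i < l \<Longrightarrow> is_effect (enat 3) (e i)"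
    and es: "(\<Sum>i<l. e i) = unit_effect (enat 3)"
    and ed: "\<And>i j. i < l \<Longrightarrow> j < l \<Longrightarrow> e i \<bullet> \<omega> j = (if i = j then 1 else 0)"
    using pd unfolding perfectly_distinguishable_def by blast
  have es3: "(\<Sum>i<l. e i) = e3" using es unit_effect_fin[of 3] by simp
  define lm where "lm k i = Lam k \<bullet> \<omega> i" for k i
  have lnn: "\<And>k i. k < 3 \<Longrightarrow> i < l \<Longrightarrow> 0 \<le> lm k i" unfolding lm_def using mem Lam_nonneg by blast
  have eW: "\<And>i k. i < l \<Longrightarrow> k < 3 \<Longrightarrow> 0 \<le> e i \<bullet> W3 k"
    using eff W3_mem unfolding is_effect_def by blast
  have expand: "e i' \<bullet> \<omega> i = (\<Sum>k<3. lm k i * (e i' \<bullet> W3 k))" for i' i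
  proof -
    have "e i' \<bullet> \<omega> i = e i' \<bullet> (\<Sum>k<3. (Lam k \<bullet> \<omega> i) *\<^sub>R W3 k)" using recon[of "\<omega> i"] by simp
    also have "\<dots> = (\<Sum>k<3. lm k i * (e i' \<bullet> W3 k))"
      by (simp add: inner_sum_right lm_def)
    finally show ?thesis .
  qed
  have sumW: "(\<Sum>i<l. e i \<bullet> W3 k) = 1" if "k < 3" for k
  proof -
    have "(\<Sum>i<l. e i \<bullet> W3 k) = (\<Sum>i<l. e i) \<bullet> W3 k" by (simp add: inner_sum_left)
    also have "\<dots> = 1" using es3 W3_mem[OF that] Omega_z by (simp add: e3_inner)
    finally show ?thesis .
  qed
  have zero_of: "e i' \<bullet> W3 k = 0" if "i' < l" "i0 < l" "i' \<noteq> i0" "k < 3" "lm k i0 > 0" for i' i0 k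
  proof -
    have "(\<Sum>k<3. lm k i0 * (e i' \<bullet> W3 k)) = 0" using expand[of i' i0] ed[of i' i0] that by simp
    moreover have "\<forall>k'\<in>{..<3}. 0 \<le> lm k' i0 * (e i' \<bullet> W3 k')" using lnn eW that by simp
    ultimately have "lm k i0 * (e i' \<bullet> W3 k) = 0"
      using sum_nonneg_0[of "{..<3}" "\<lambda>k'. lm k' i0 * (e i' \<bullet> W3 k')" k] that(4) by auto
    then show ?thesis using that by simp
  qed
  have disj: "lm k i = 0 \<or> lm k j = 0" if "k < 3" "i < l" "j < l" "i \<noteq> j" for k i j
  proof (rule ccontr)
    assume "\<not> (lm k i = 0 \<or> lm k j = 0)"
    then have pos: "lm k i > 0" "lm k j > 0" using lnn that by (auto simp: less_le)
    have "\<forall>i'\<in>{..<l}. e i' \<bullet> W3 k = 0"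
    proof
      fix i' assume "i' \<in> {..<l}"
      then have i': "i' < l" by simp
      show "e i' \<bullet> W3 k = 0"
      proof (cases "i' = i")
        case True
        then have "i' \<noteq> j" using that by simp
        then show ?thesis using zero_of[OF i' that(3) _ that(1) pos(2)] by simp
      next
        case False
        then show ?thesis using zero_of[OF i' that(2) _ that(1) pos(1)] by simp
      qed
    qed
    then have "(\<Sum>i<l. e i \<bullet> W3 k) = 0" by simp
    then show False using sumW[OF that(1)] by simp
  qed
  have Lmix: "Lam k \<bullet> (\<Sum>i<l. p i *\<^sub>R \<omega> i) = (\<Sum>i<l. p i * lm k i)" for k
    by (simp add: inner_sum_right lm_def)
  have step1: "hh (\<Sum>i<l. p i * lm k i) = (\<Sum>i<l. hh (p i * lm k i))" if "k < 3" for k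
    by (rule hh_sum_disj) (use disj[OF that] in auto)
  have step2: "hh (p i * lm k i) = p i * hh (lm k i) + lm k i * hh (p i)" if "k < 3" "i < l" for k i
    using pp lnn that by (intro hh_mult) auto
  have lsum: "(\<Sum>k<3. lm k i) = 1" if "i < l" for i
    using Lam_sum[of "\<omega> i"] Omega_z[OF mem[OF that]] by (simp add: lm_def)
  have "Stri (\<Sum>i<l. p i *\<^sub>R \<omega> i) = (\<Sum>k<3. \<Sum>i<l. hh (p i * lm k i))"
    unfolding Stri_def Lmix by (rule sum.cong) (auto simp: step1)
  also have "\<dots> = (\<Sum>k<3. \<Sum>i<l. p i * hh (lm k i) + lm k i * hh (p i))"
    by (rule sum.cong, simp, rule sum.cong) (auto simp: step2)
  also have "\<dots> = (\<Sum>i<l. \<Sum>k<3. p i * hh (lm k i) + lm k i * hh (p i))"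
    by (rule sum.swap)
  also have "\<dots> = (\<Sum>i<l. p i * Stri (\<omega> i) + hh (p i) * (\<Sum>k<3. lm k i))"
    by (simp add: sum.distrib sum_distrib_left sum_distrib_right Stri_def lm_def algebra_simps)
  also have "\<dots> = (\<Sum>i<l. p i * Stri (\<omega> i) + hh (p i))"
    by (rule sum.cong) (auto simp: lsum)
  also have "\<dots> = (\<Sum>i<l. p i * Stri (\<omega> i)) - (\<Sum>i<l. plogp (p i))"
    by (simp add: sum_subtractf hh_def)
  finally show "Stri (\<Sum>i<l. p i *\<^sub>R \<omega> i) = (\<Sum>i<l. p i * Stri (\<omega> i)) - (\<Sum>i<l. plogp (p i))" .
qed

theorem mainTheorem7:
  fixes n :: enat
  assumes "n \<ge> 3"
  shows "(\<exists>S :: real^3 \<Rightarrow> real. entropy_like n S) \<longleftrightarrow> (n = 3 \<or> n = \<infinity>)"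
proof (cases n)
  case (enat m)
  have m3: "m \<ge> 3" using assms enat by (simp add: numeral_eq_enat)
  show ?thesis
  proof (cases "m = 3")
    case True
    then have "n = 3" using enat by (simp add: numeral_eq_enat)
    moreover have "entropy_like n Stri" using tri_entropy True enat by simp
    ultimately show ?thesis by blast
  next
    case False
    then have m4: "m \<ge> 4" using m3 by simp
    have "n \<noteq> 3" using enat False by (simp add: numeral_eq_enat)
    moreover have "n \<noteq> \<infinity>" using enat by simp
    moreover have "\<not> (\<exists>S :: real^3 \<Rightarrow> real. entropy_like n S)"
      using no_entropy[OF m4] enat by blast
    ultimately show ?thesis by blast
  qed
next
  case infinity
  have "entropy_like n Sdisc" using disc_entropy infinity by simp
  then show ?thesis using infinity by blast
qed

end
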